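(* Every uncrossable family of cycles in a graph is strongly uncrossable.
   Context: Graphs may be directed or undirected; cycles are simple. For paths/cycles, $P+Q$ denotes the union (multiset sum) of edge sets and $C-P$ the edge set of $C$ minus that of $P$. A family $\mathcal{C}$ of cycles is uncrossable if for all $C_1,C_2\in\mathcal{C}$ and every path $P_2$ in $C_2$ sharing only its two endpoints with $C_1$, there is a path $P_1$ in $C_1$ between these endpoints with $P_1+P_2\in\mathcal{C}$ and such that $(C_1-P_1)+(C_2-P_2)$ contains a cycle of $\mathcal{C}$. The family $\mathcal{C}$ is strongly uncrossable if for all $C_1,C_2\in\mathcal{C}$ and any two vertices $v,w$ lying on both $C_1$ and $C_2$, there are a $v$-$w$-path $P_1$ in $C_1$ and a $v$-$w$-path $P_2$ in $C_2$ (subpaths of the cycles with endpoints $v,w$) such that both $P_1+P_2$ and $(C_1-P_1)+(C_2-P_2)$ contain (the edge set of) a cycle in $\mathcal{C}$. *)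

theory Defs
  imports Main
begin

text \<open>A (multi)graph, directed or undirected. Edges are abstract elements with a
tail and a head; in the undirected case an edge may be traversed either way.\<close>

record ('v, 'e) graph =
  gverts :: "'v set"
  gedges :: "'e set"
  gtail  :: "'e \<Rightarrow> 'v"
  ghead  :: "'e \<Rightarrow> 'v"
  gdirected :: bool

definition wf_graph :: "('v, 'e) graph \<Rightarrow> bool" where
  "wf_graph G \<longleftrightarrow> finite (gverts G) \<and> finite (gedges G) \<and>
     (\<forall>e\<in>gedges G. gtail G e \<in> gverts G \<and> ghead G e \<in> gverts G)"

definition step :: "('v, 'e) graph \<Rightarrow> 'e \<Rightarrow> 'v \<Rightarrow> 'v \<Rightarrow> bool" where
  "step G e x y \<longleftrightarrow> e \<in> gedges G \<and>
     ((gtail G e = x \<and> ghead G e = y) \<or> (\<not> gdirected G \<and> gtail G e = y \<and> ghead G e = x))"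

definition walk :: "('v, 'e) graph \<Rightarrow> 'v list \<Rightarrow> 'e list \<Rightarrow> bool" where
  "walk G vs es \<longleftrightarrow> length vs = Suc (length es) \<and>
     (\<forall>i < length es. step G (es ! i) (vs ! i) (vs ! Suc i))"

definition is_path :: "('v, 'e) graph \<Rightarrow> 'e set \<Rightarrow> 'v \<Rightarrow> 'v \<Rightarrow> bool" where
  "is_path G P v w \<longleftrightarrow> (\<exists>vs es. walk G vs es \<and> es \<noteq> [] \<and> distinct vs \<and>
     hd vs = v \<and> last vs = w \<and> set es = P)"

definition is_cycle :: "('v, 'e) graph \<Rightarrow> 'e set \<Rightarrow> bool" where
  "is_cycle G C \<longleftrightarrow> (\<exists>vs es. walk G vs es \<and> es \<noteq> [] \<and> distinct es \<and>
     distinct (tl vs) \<and> hd vs = last vs \<and> set es = C)"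

definition evs :: "('v, 'e) graph \<Rightarrow> 'e set \<Rightarrow> 'v set" where
  "evs G F = gtail G ` F \<union> ghead G ` F"

definition subpath :: "('v, 'e) graph \<Rightarrow> 'e set \<Rightarrow> 'e set \<Rightarrow> 'v \<Rightarrow> 'v \<Rightarrow> bool" where
  "subpath G C P v w \<longleftrightarrow> P \<subseteq> C \<and> (is_path G P v w \<or> is_path G P w v)"

definition cycle_family :: "('v, 'e) graph \<Rightarrow> 'e set set \<Rightarrow> bool" where
  "cycle_family G \<C> \<longleftrightarrow> (\<forall>C\<in>\<C>. is_cycle G C)"

text \<open>Multiset sums of edge sets are rendered via unions; P1+P2 being a cycle in the
family requires the sum to be a set, i.e. P1, P2 disjoint. "Contains a cycle" only
depends on the support, i.e. the union.\<close>
definition uncrossable :: "('v, 'e) graph \<Rightarrow> 'e set set \<Rightarrow> bool" where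
  "uncrossable G \<C> \<longleftrightarrow>
    (\<forall>C1\<in>\<C>. \<forall>C2\<in>\<C>. \<forall>P2 v w.
       subpath G C2 P2 v w \<and> evs G P2 \<inter> evs G C1 = {v, w} \<longrightarrow>
       (\<exists>P1. subpath G C1 P1 v w \<and> P1 \<inter> P2 = {} \<and> P1 \<union> P2 \<in> \<C> \<and>
          (\<exists>D\<in>\<C>. D \<subseteq> (C1 - P1) \<union> (C2 - P2))))"

definition strongly_uncrossable :: "('v, 'e) graph \<Rightarrow> 'e set set \<Rightarrow> bool" where
  "strongly_uncrossable G \<C> \<longleftrightarrow>
    (\<forall>C1\<in>\<C>. \<forall>C2\<in>\<C>. \<forall>v w.
       v \<noteq> w \<and> v \<in> evs G C1 \<and> w \<in> evs G C1 \<and> v \<in> evs G C2 \<and> w \<in> evs G C2 \<longrightarrow>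
       (\<exists>P1 P2. subpath G C1 P1 v w \<and> subpath G C2 P2 v w \<and>
          (\<exists>D\<in>\<C>. D \<subseteq> P1 \<union> P2) \<and>
          (\<exists>D\<in>\<C>. D \<subseteq> (C1 - P1) \<union> (C2 - P2))))"

end

theory Submission
  imports Defs
begin

definition incid :: "('v,'e) graph \<Rightarrow> 'e \<Rightarrow> 'v \<Rightarrow> 'v \<Rightarrow> bool" where
  "incid G e x y \<longleftrightarrow> {gtail G e, ghead G e} = {x, y}"

lemma step_incid: "step G e x y \<Longrightarrow> incid G e x y"
  by (auto simp: step_def incid_def)

lemma walk_incid: "walk G us fs \<Longrightarrow> i < length fs \<Longrightarrow> incid G (fs!i) (us!i) (us!Suc i)"
  by (auto simp: walk_def intro: step_incid)

lemma walk_distinct_edges: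
  assumes w: "walk G us fs" and d: "distinct us" shows "distinct fs"
proof -
  have "fs!i \<noteq> fs!j" if "i < j" "j < length fs" for i j
  proof
    assume eq: "fs!i = fs!j"
    have "incid G (fs!i) (us!i) (us!Suc i)" "incid G (fs!j) (us!j) (us!Suc j)"
      using walk_incid[OF w] that by auto
    hence "{us!i, us!Suc i} = {us!j, us!Suc j}" using eq by (simp add: incid_def)
    hence "us!i = us!j \<or> us!i = us!Suc j" by auto
    moreover have "length us = Suc (length fs)" using w by (simp add: walk_def)
    ultimately show False using d that by (auto simp: nth_eq_iff_index_eq)
  qed
  thus ?thesis by (metis distinct_conv_nth linorder_neqE_nat)
qed

lemma evs_walk:
  assumes w: "walk G us fs" and ne: "fs \<noteq> []" shows "evs G (set fs) = set us"
proof
  have L: "length us = Suc (length fs)" using w by (simp add: walk_def)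
  show "evs G (set fs) \<subseteq> set us"
  proof
    fix x assume "x \<in> evs G (set fs)"
    then obtain i where i: "i < length fs" "x = gtail G (fs!i) \<or> x = ghead G (fs!i)"
      by (auto simp: evs_def in_set_conv_nth)
    have "incid G (fs!i) (us!i) (us!Suc i)" using walk_incid[OF w i(1)] .
    hence "x \<in> {us!i, us!Suc i}" using i(2) by (auto simp: incid_def doubleton_eq_iff)
    thus "x \<in> set us" using L i(1) by auto
  qed
  show "set us \<subseteq> evs G (set fs)"
  proof
    fix x assume "x \<in> set us"
    then obtain i where i: "i < length us" "x = us!i" by (auto simp: in_set_conv_nth)
    show "x \<in> evs G (set fs)"
    proof (cases "i < length fs")
      case True
      have "incid G (fs!i) (us!i) (us!Suc i)" using walk_incid[OF w True] .
      hence "x \<in> {gtail G (fs!i), ghead G (fs!i)}" using i by (auto simp: incid_def)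
      thus ?thesis using True by (auto simp: evs_def)
    next
      case False
      hence ii: "i = Suc (length fs - 1)" "length fs - 1 < length fs" using i L ne by auto
      have "incid G (fs!(length fs - 1)) (us!(length fs - 1)) (us!i)" using walk_incid[OF w ii(2)] ii by simp
      hence "x \<in> {gtail G (fs!(length fs - 1)), ghead G (fs!(length fs - 1))}" using i by (auto simp: incid_def)
      thus ?thesis using ii(2) by (auto simp: evs_def)
    qed
  qed
qed

lemma walk_take: "walk G us fs \<Longrightarrow> m \<le> length fs \<Longrightarrow> walk G (take (Suc m) us) (take m fs)"
  by (auto simp: walk_def)

lemma walk_drop: "walk G us fs \<Longrightarrow> m \<le> length fs \<Longrightarrow> walk G (drop m us) (drop m fs)"
  by (auto simp: walk_def add.commute)

lemma path_split_idx:
  assumes w: "walk G us fs" and d: "distinct us" and m: "0 < m" "m < length fs"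
  shows "is_path G (set (take m fs)) (us!0) (us!m)" "is_path G (set (drop m fs)) (us!m) (last us)"
    "set (take m fs) \<union> set (drop m fs) = set fs" "set (take m fs) \<inter> set (drop m fs) = {}"
proof -
  have L: "length us = Suc (length fs)" using w by (simp add: walk_def)
  show "is_path G (set (take m fs)) (us!0) (us!m)"
    unfolding is_path_def
    apply (rule exI[of _ "take (Suc m) us"], rule exI[of _ "take m fs"])
  proof (intro conjI)
    show "walk G (take (Suc m) us) (take m fs)" using walk_take[OF w, of m] m by simp
    show "take m fs \<noteq> []" using m by (cases fs) auto
    show "distinct (take (Suc m) us)" using d by simp
    show "hd (take (Suc m) us) = us ! 0" using L by (cases us) auto
    show "last (take (Suc m) us) = us ! m" using L m by (simp add: take_Suc_conv_app_nth)
  qed simp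
  show "is_path G (set (drop m fs)) (us!m) (last us)"
    unfolding is_path_def
    apply (rule exI[of _ "drop m us"], rule exI[of _ "drop m fs"])
    using walk_drop[OF w, of m] m d L by (auto simp: hd_drop_conv_nth)
  show "set (take m fs) \<union> set (drop m fs) = set fs"
    by (metis append_take_drop_id set_append)
  show "set (take m fs) \<inter> set (drop m fs) = {}"
    using walk_distinct_edges[OF w d] by (simp add: set_take_disj_set_drop_if_distinct)
qed

lemma path_split:
  assumes P: "is_path G P a b" and c: "c \<in> evs G P" "c \<noteq> a" "c \<noteq> b"
  shows "\<exists>P' P''. is_path G P' a c \<and> is_path G P'' c b \<and> P' \<union> P'' = P \<and> P' \<inter> P'' = {}"
proof -
  obtain us fs where w: "walk G us fs" "fs \<noteq> []" "distinct us" "hd us = a" "last us = b" "set fs = P"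
    using P by (auto simp: is_path_def)
  have L: "length us = Suc (length fs)" using w by (simp add: walk_def)
  have "c \<in> set us" using evs_walk[OF w(1,2)] c w(6) by auto
  then obtain m where m: "m < length us" "us!m = c" by (auto simp: in_set_conv_nth)
  have "us \<noteq> []" using L by auto
  hence "m \<noteq> 0" using m c w(4) by (metis hd_conv_nth)
  moreover have "m \<noteq> length fs" using m c w(5) L by (metis last_conv_nth diff_Suc_1 list.size(3) nat.distinct(1))
  ultimately have "0 < m" "m < length fs" using m L by auto
  from path_split_idx[OF w(1,3) this] show ?thesis
    using w m L by (metis hd_conv_nth list.size(3) nat.distinct(1))
qed

lemma path_sub: "is_path G P a b \<Longrightarrow> P \<noteq> {}"
  by (auto simp: is_path_def)

definition crep :: "('v,'e) graph \<Rightarrow> nat \<Rightarrow> (int \<Rightarrow> 'v) \<Rightarrow> (int \<Rightarrow> 'e) \<Rightarrow> bool" where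
  "crep G n cv ce \<longleftrightarrow> 0 < n \<and> (\<forall>i j. cv i = cv j \<longleftrightarrow> int n dvd (i - j)) \<and>
     (\<forall>i j. ce i = ce j \<longleftrightarrow> int n dvd (i - j)) \<and> (\<forall>i. incid G (ce i) (cv i) (cv (i+1)))"

definition arc :: "(int \<Rightarrow> 'e) \<Rightarrow> int \<Rightarrow> nat \<Rightarrow> 'e set" where
  "arc ce i k = (\<lambda>t. ce (i + int t)) ` {..<k}"

lemma crep_mirror:
  assumes "crep G n cv ce" shows "crep G n (\<lambda>i. cv (-i)) (\<lambda>i. ce (-i-1))"
proof -
  have d: "int n dvd (-i - -j) \<longleftrightarrow> int n dvd (i - j)" for i j
    by (metis dvd_minus_iff minus_diff_eq diff_minus_eq_add uminus_add_conv_diff)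
  have "incid G (ce (-i-1)) (cv (-i)) (cv (-(i+1)))" for i
  proof -
    have "incid G (ce (-i-1)) (cv (-i-1)) (cv (-i-1+1))" using assms unfolding crep_def by blast
    thus ?thesis by (auto simp: incid_def insert_commute)
  qed
  moreover have "int n dvd (- i - 1 - (- j - 1)) \<longleftrightarrow> int n dvd (i - j)" for i j
    using d[of i j] by (simp add: algebra_simps)
  ultimately show ?thesis using assms d unfolding crep_def by auto
qed

lemma cycle_rep:
  assumes "is_cycle G C"
  shows "\<exists>n cv ce. crep G n cv ce \<and> (\<forall>i. step G (ce i) (cv i) (cv (i+1))) \<and> C = range ce \<and> evs G C = range cv"
proof -
  obtain vs es where c: "walk G vs es" "es \<noteq> []" "distinct es" "distinct (tl vs)" "hd vs = last vs" "set es = C"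
    using assms by (auto simp: is_cycle_def)
  define N where "N = length es"
  have L: "length vs = Suc N" using c by (simp add: walk_def N_def)
  have N0: "0 < N" using c by (simp add: N_def)
  have vsN: "vs ! N = vs ! 0" using c(5) L by (metis diff_Suc_1 hd_conv_nth last_conv_nth list.size(3) nat.distinct(1))
  have vinj: "a = b" if "a < N" "b < N" "vs!a = vs!b" for a b
  proof -
    have t: "tl vs ! k = vs ! Suc k" if "k < N" for k using that L by (simp add: nth_tl)
    have ltl: "length (tl vs) = N" using L by simp
    have gen: "a = b" if "0 < a" "0 < b" "a \<le> N" "b \<le> N" "vs!a = vs!b" for a b
    proof -
      have "tl vs ! (a-1) = tl vs ! (b-1)" using t[of "a-1"] t[of "b-1"] that by simp
      hence "a - 1 = b - 1" using c(4) ltl that by (simp add: nth_eq_iff_index_eq)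
      thus ?thesis using that by simp
    qed
    show ?thesis
    proof (cases "a = 0 \<or> b = 0")
      case False thus ?thesis using gen that by auto
    next
      case True
      thus ?thesis
      proof
        assume a0: "a = 0"
        show ?thesis
        proof (rule ccontr)
          assume "a \<noteq> b" hence "0 < b" using a0 by simp
          hence "N = b" using gen[of N b] that a0 vsN N0 by simp
          thus False using that by simp
        qed
      next
        assume b0: "b = 0"
        show ?thesis
        proof (rule ccontr)
          assume "a \<noteq> b" hence "0 < a" using b0 by simp
          hence "N = a" using gen[of N a] that b0 vsN N0 by simp
          thus False using that by simp
        qed
      qed
    qed
  qed
  define f where "f i = nat (i mod int N)" for i
  have fN: "f i < N" for i using N0 by (simp add: f_def nat_less_iff)
  have feq: "f i = f j \<longleftrightarrow> int N dvd (i - j)" for i j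
  proof -
    have "0 \<le> i mod int N" "0 \<le> j mod int N" using N0 by auto
    hence "f i = f j \<longleftrightarrow> i mod int N = j mod int N" unfolding f_def by (simp add: eq_nat_nat_iff)
    thus ?thesis by (simp add: mod_eq_dvd_iff)
  qed
  have fint: "f (int k) = k" if "k < N" for k using that by (simp add: f_def nat_mod_as_int)
  have fsuc: "f (i+1) = (if Suc (f i) = N then 0 else Suc (f i))" for i
  proof -
    define r where "r = i mod int N"
    have r: "0 \<le> r" "r < int N" using N0 by (auto simp: r_def)
    have "(i + 1) mod int N = (r + 1) mod int N" by (simp add: r_def mod_simps)
    moreover have "(r + 1) mod int N = (if r + 1 = int N then 0 else r + 1)"
      using r by auto
    ultimately have e: "(i + 1) mod int N = (if r + 1 = int N then 0 else r + 1)" by simp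
    have fi: "f i = nat r" by (simp add: f_def r_def)
    show ?thesis
    proof (cases "r + 1 = int N")
      case True
      hence "Suc (f i) = N" using fi r by linarith
      thus ?thesis using e True by (simp add: f_def)
    next
      case False
      hence "Suc (f i) \<noteq> N" using fi r by linarith
      moreover have "f (i+1) = Suc (f i)" using e False fi r by (simp add: f_def nat_add_distrib)
      ultimately show ?thesis by simp
    qed
  qed
  define cv where "cv i = vs ! f i" for i
  define ce where "ce i = es ! f i" for i
  have step: "step G (ce i) (cv i) (cv (i+1))" for i
  proof -
    have "step G (es ! f i) (vs ! f i) (vs ! Suc (f i))" using c(1) fN[of i] by (simp add: walk_def N_def)
    thus ?thesis unfolding ce_def cv_def fsuc using vsN by auto
  qed
  have cveq: "cv i = cv j \<longleftrightarrow> int N dvd (i - j)" for i j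
  proof -
    have "cv i = cv j \<longleftrightarrow> f i = f j" unfolding cv_def using vinj[OF fN[of i] fN[of j]] by auto
    thus ?thesis using feq by simp
  qed
  have ceeq: "ce i = ce j \<longleftrightarrow> int N dvd (i - j)" for i j
  proof -
    have "ce i = ce j \<longleftrightarrow> f i = f j" unfolding ce_def using c(3) fN[of i] fN[of j]
      by (simp add: N_def nth_eq_iff_index_eq)
    thus ?thesis using feq by simp
  qed
  have rce: "range ce = C"
  proof
    show "range ce \<subseteq> C" using fN c(6) by (auto simp: ce_def N_def)
    show "C \<subseteq> range ce"
    proof
      fix x assume "x \<in> C"
      then obtain k where "k < N" "x = es ! k" using c(6) by (auto simp: in_set_conv_nth N_def)
      thus "x \<in> range ce" unfolding ce_def by (metis fint rangeI)
    qed
  qed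
  have rcv: "evs G C = range cv"
  proof -
    have "evs G C = set vs" using evs_walk[OF c(1,2)] c(6) by simp
    also have "\<dots> = range cv"
    proof
      show "range cv \<subseteq> set vs" using fN L unfolding cv_def by (metis image_subsetI less_SucI nth_mem)
      show "set vs \<subseteq> range cv"
      proof
        fix x assume "x \<in> set vs"
        then obtain k where k: "k < Suc N" "x = vs ! k" using L by (metis in_set_conv_nth)
        show "x \<in> range cv"
        proof (cases "k < N")
          case True thus ?thesis using k unfolding cv_def by (metis fint rangeI)
        next
          case False hence "k = N" using k by simp
          hence "x = vs ! 0" using k vsN by simp
          thus ?thesis unfolding cv_def using fint[OF N0] by (metis rangeI)
        qed
      qed
    qed
    finally show ?thesis .
  qed
  have "crep G N cv ce" unfolding crep_def using N0 cveq ceeq step_incid[OF step] by simp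
  thus ?thesis using step rce rcv by blast
qed

lemma small_dvd: "int n dvd (x::int) \<Longrightarrow> \<bar>x\<bar> < int n \<Longrightarrow> x = 0"
  using dvd_imp_le_int[of x "int n"] by force

lemma crep_cv: "crep G n cv ce \<Longrightarrow> cv i = cv j \<longleftrightarrow> int n dvd (i - j)"
  by (simp add: crep_def)
lemma crep_ce: "crep G n cv ce \<Longrightarrow> ce i = ce j \<longleftrightarrow> int n dvd (i - j)"
  by (simp add: crep_def)
lemma crep_incid: "crep G n cv ce \<Longrightarrow> incid G (ce i) (cv i) (cv (i+1))"
  by (simp add: crep_def)
lemma crep_pos: "crep G n cv ce \<Longrightarrow> 0 < n"
  by (simp add: crep_def)

lemma arc_path:
  assumes cr: "crep G n cv ce" and fw: "\<forall>i. step G (ce i) (cv i) (cv (i+1))" and k: "0 < k" "k < n"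
  shows "is_path G (arc ce i k) (cv i) (cv (i + int k))"
proof -
  define vs where "vs = map (\<lambda>j. cv (i + int j)) [0..<Suc k]"
  define es where "es = map (\<lambda>j. ce (i + int j)) [0..<k]"
  have "walk G vs es" unfolding walk_def vs_def es_def
  proof (intro conjI allI impI)
    fix t assume "t < length (map (\<lambda>j. ce (i + int j)) [0..<k])"
    hence t: "t < k" by simp
    have "step G (ce (i + int t)) (cv (i + int t)) (cv (i + int t + 1))" using fw by blast
    moreover have "map (\<lambda>j. cv (i + int j)) [0..<Suc k] ! Suc t = cv (i + int t + 1)"
      using t by (simp del: upt_Suc add: ac_simps)
    moreover have "map (\<lambda>j. cv (i + int j)) [0..<Suc k] ! t = cv (i + int t)"
      using t by (simp del: upt_Suc)
    ultimately show "step G (map (\<lambda>j. ce (i + int j)) [0..<k] ! t) (map (\<lambda>j. cv (i + int j)) [0..<Suc k] ! t)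
          (map (\<lambda>j. cv (i + int j)) [0..<Suc k] ! Suc t)" using t by simp
  qed simp
  moreover have "distinct vs" unfolding vs_def distinct_map
  proof
    show "inj_on (\<lambda>j. cv (i + int j)) (set [0..<Suc k])"
    proof (rule inj_onI)
      fix a b assume ab: "a \<in> set [0..<Suc k]" "b \<in> set [0..<Suc k]" "cv (i + int a) = cv (i + int b)"
      hence "int n dvd (int a - int b)" using crep_cv[OF cr] by (metis add_diff_cancel_left)
      moreover have "\<bar>int a - int b\<bar> < int n" using ab k by auto
      ultimately have "int a - int b = 0" by (rule small_dvd)
      thus "a = b" by simp
    qed
  qed simp
  moreover have "es \<noteq> []" using k by (simp add: es_def)
  moreover have "hd vs = cv i" by (simp add: vs_def upt_conv_Cons del: upt_Suc)
  moreover have "last vs = cv (i + int k)" by (simp add: vs_def)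
  moreover have "set es = arc ce i k" by (auto simp: es_def arc_def)
  ultimately show ?thesis unfolding is_path_def by (intro exI[of _ vs] exI[of _ es]) simp
qed

lemma arc_periodic:
  assumes cr: "crep G n cv ce" and d: "int n dvd (i - p)" shows "arc ce i k = arc ce p k"
proof -
  have "ce (i + int t) = ce (p + int t)" for t using crep_ce[OF cr] d by simp
  thus ?thesis by (simp add: arc_def)
qed

lemma arc_sub: "arc ce i k \<subseteq> range ce" by (auto simp: arc_def)

lemma arc_compl:
  assumes cr: "crep G n cv ce" and k: "k \<le> n"
  shows "range ce - arc ce i k = arc ce (i + int k) (n - k)"
proof -
  have n0: "0 < n" using crep_pos[OF cr] .
  have disj: "arc ce i k \<inter> arc ce (i + int k) (n - k) = {}"
  proof (rule ccontr)
    assume "arc ce i k \<inter> arc ce (i + int k) (n - k) \<noteq> {}"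
    then obtain a b where ab: "a < k" "b < n - k" "ce (i + int a) = ce (i + int k + int b)"
      by (auto simp: arc_def)
    hence "int n dvd (int a - int k - int b)" using crep_ce[OF cr] by (simp add: algebra_simps)
    moreover have "\<bar>int a - int k - int b\<bar> < int n" using ab k by auto
    ultimately have "int a - int k - int b = 0" by (rule small_dvd)
    thus False using ab by simp
  qed
  have cov: "range ce \<subseteq> arc ce i k \<union> arc ce (i + int k) (n - k)"
  proof
    fix x assume "x \<in> range ce"
    then obtain u where u: "x = ce u" by auto
    define t where "t = nat ((u - i) mod int n)"
    have t: "int t = (u - i) mod int n" "t < n" using n0 by (auto simp: t_def nat_less_iff)
    have "int n dvd (u - (i + int t))" using t(1)
    proof -
      have "u - (i + int t) = (u - i) - (u - i) mod int n" using t(1) by simp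
      also have "\<dots> = int n * ((u - i) div int n)" by (simp add: minus_mod_eq_mult_div)
      finally show ?thesis by simp
    qed
    hence xe: "x = ce (i + int t)" using u crep_ce[OF cr] by simp
    show "x \<in> arc ce i k \<union> arc ce (i + int k) (n - k)"
    proof (cases "t < k")
      case True thus ?thesis using xe by (auto simp: arc_def)
    next
      case False
      hence "x = ce (i + int k + int (t - k))" "t - k < n - k" using xe t by auto
      thus ?thesis by (auto simp: arc_def)
    qed
  qed
  have "arc ce (i + int k) (n - k) \<subseteq> range ce" by (rule arc_sub)
  thus ?thesis using disj cov by auto
qed

definition iwalk :: "('v,'e) graph \<Rightarrow> 'v list \<Rightarrow> 'e list \<Rightarrow> bool" where
  "iwalk G us fs \<longleftrightarrow> length us = Suc (length fs) \<and> (\<forall>j<length fs. incid G (fs!j) (us!j) (us!Suc j))"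

lemma walk_iwalk: "walk G us fs \<Longrightarrow> iwalk G us fs"
  by (simp add: iwalk_def walk_incid) (simp add: walk_def)

lemma doubleton_same: "{a, b} = {a, c} \<Longrightarrow> b = c"
  by (auto simp: doubleton_eq_iff)

lemma core:
  assumes cr: "crep G n cv ce" and w: "iwalk G us fs" and d: "distinct us" and sub: "set fs \<subseteq> range ce"
    and u0: "us!0 = cv i0" and f0: "fs!0 = ce i0"
  shows "j < length fs \<Longrightarrow> fs!j = ce (i0 + int j) \<and> us!j = cv (i0 + int j)"
proof (induction j)
  case 0 thus ?case using u0 f0 by simp
next
  case (Suc j)
  have L: "length us = Suc (length fs)" using w by (simp add: iwalk_def)
  have IH: "fs!j = ce (i0 + int j)" "us!j = cv (i0 + int j)" using Suc by auto
  have ij: "incid G (fs!j) (us!j) (us!Suc j)" using w Suc.prems by (simp add: iwalk_def)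
  have "incid G (ce (i0 + int j)) (cv (i0 + int j)) (cv (i0 + int j + 1))" using crep_incid[OF cr] .
  hence "{us!j, us!Suc j} = {cv (i0 + int j), cv (i0 + int j + 1)}" using ij IH by (simp add: incid_def)
  hence "us!Suc j = cv (i0 + int j + 1)" using IH(2) by (metis doubleton_same)
  hence us1: "us!Suc j = cv (i0 + int (Suc j))" by (simp add: ac_simps)
  have "fs!Suc j \<in> range ce" using sub Suc.prems nth_mem by blast
  then obtain t where t: "fs!Suc j = ce t" by blast
  have i1: "incid G (fs!Suc j) (us!Suc j) (us!Suc (Suc j))" using w Suc.prems by (simp add: iwalk_def)
  hence e1: "{us!Suc j, us!Suc (Suc j)} = {cv t, cv (t+1)}" using crep_incid[OF cr, of t] t by (simp add: incid_def)
  show ?case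
  proof (cases "us!Suc j = cv t")
    case True
    hence "int n dvd (i0 + int (Suc j) - t)" using us1 crep_cv[OF cr] by metis
    hence "ce t = ce (i0 + int (Suc j))" using crep_ce[OF cr] by (metis dvd_minus_iff minus_diff_eq)
    thus ?thesis using t us1 by simp
  next
    case False
    hence "us!Suc j = cv (t+1)" using e1 by auto
    hence "int n dvd (i0 + int j + 1 - (t + 1))" using us1 crep_cv[OF cr] by (metis add.assoc of_nat_Suc add.commute)
    hence "ce t = ce (i0 + int j)" using crep_ce[OF cr] by (metis dvd_minus_iff minus_diff_eq add_diff_cancel_right)
    hence "fs!Suc j = fs!j" using t IH by simp
    hence "{us!j, us!Suc j} = {us!Suc j, us!Suc (Suc j)}" using ij i1 by (simp add: incid_def)
    hence "us!j = us!Suc j \<or> us!j = us!Suc (Suc j)" by auto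
    thus ?thesis using d L Suc.prems by (auto simp: nth_eq_iff_index_eq)
  qed
qed

lemma core_full:
  assumes cr: "crep G n cv ce" and w: "iwalk G us fs" and d: "distinct us" and sub: "set fs \<subseteq> range ce"
    and ne: "fs \<noteq> []" and u0: "us!0 = cv i0" and f0: "fs!0 = ce i0"
  shows "set fs = arc ce i0 (length fs) \<and> last us = cv (i0 + int (length fs)) \<and> length fs < n"
proof -
  note c = core[OF cr w d sub u0 f0]
  have L: "length us = Suc (length fs)" using w by (simp add: iwalk_def)
  have all: "us!j = cv (i0 + int j)" if "j \<le> length fs" for j
  proof (cases "j < length fs")
    case True thus ?thesis using c by blast
  next
    case False
    hence j: "j = Suc (length fs - 1)" "length fs - 1 < length fs" using that ne by auto
    have "incid G (fs!(length fs - 1)) (us!(length fs - 1)) (us!j)" using w j by (simp add: iwalk_def)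
    moreover have "fs!(length fs - 1) = ce (i0 + int (length fs - 1))" "us!(length fs - 1) = cv (i0 + int (length fs - 1))"
      using c j(2) by auto
    moreover have "incid G (ce (i0 + int (length fs - 1))) (cv (i0 + int (length fs - 1))) (cv (i0 + int (length fs - 1) + 1))"
      using crep_incid[OF cr] .
    ultimately have "us!j = cv (i0 + int (length fs - 1) + 1)" unfolding incid_def by (metis doubleton_same)
    thus ?thesis using j by simp
  qed
  have "set fs = (\<lambda>j. fs!j) ` {..<length fs}" by (auto simp: in_set_conv_nth)
  also have "\<dots> = arc ce i0 (length fs)" unfolding arc_def using c by (intro image_cong) auto
  finally have "set fs = arc ce i0 (length fs)" .
  moreover have "last us = cv (i0 + int (length fs))" using all[of "length fs"] L
    by (metis diff_Suc_1 last_conv_nth list.size(3) nat.distinct(1) order_refl)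
  moreover have "length fs < n"
  proof (rule ccontr)
    assume "\<not> length fs < n"
    hence "us!n = cv (i0 + int n)" using all by simp
    also have "\<dots> = us!0" using u0 crep_cv[OF cr] by simp
    finally have "n = 0" using d L \<open>\<not> length fs < n\<close> by (simp add: nth_eq_iff_index_eq)
    thus False using crep_pos[OF cr] by simp
  qed
  ultimately show ?thesis by blast
qed

lemma UL:
  assumes cr: "crep G n cv ce" and P: "is_path G P a b" and sub: "P \<subseteq> range ce"
  shows "\<exists>i k. 0 < k \<and> k < n \<and> P = arc ce i k \<and> ((cv i = a \<and> cv (i + int k) = b) \<or> (cv i = b \<and> cv (i + int k) = a))"
proof -
  obtain us fs where w: "walk G us fs" "fs \<noteq> []" "distinct us" "hd us = a" "last us = b" "set fs = P"
    using P by (auto simp: is_path_def)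
  have iw: "iwalk G us fs" using walk_iwalk[OF w(1)] .
  have L: "length us = Suc (length fs)" using iw by (simp add: iwalk_def)
  have "us \<noteq> []" using L by auto
  hence a0: "us!0 = a" using w(4) by (simp add: hd_conv_nth)
  have "fs!0 \<in> set fs" using w(2) by simp
  hence "fs!0 \<in> range ce" using sub w(6) by blast
  then obtain t where t: "fs!0 = ce t" by blast
  have "incid G (fs!0) (us!0) (us!1)" using iw w(2) by (simp add: iwalk_def)
  hence e: "{us!0, us!1} = {cv t, cv (t+1)}" using crep_incid[OF cr, of t] t by (simp add: incid_def)
  show ?thesis
  proof (cases "us!0 = cv t")
    case True
    from core_full[OF cr iw w(3) _ w(2) True t] sub w(6)
    have r: "P = arc ce t (length fs)" "b = cv (t + int (length fs))" "length fs < n" using w(5,6) by auto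
    have "0 < length fs" using w(2) by simp
    thus ?thesis using r True a0 by (intro exI[of _ t] exI[of _ "length fs"]) simp
  next
    case False
    hence u0: "us!0 = cv (t+1)" using e by auto
    note cr' = crep_mirror[OF cr]
    have rr: "range (\<lambda>i. ce (-i-1)) = range ce"
    proof
      show "range (\<lambda>i. ce (-i-1)) \<subseteq> range ce" by auto
      show "range ce \<subseteq> range (\<lambda>i. ce (-i-1))"
      proof
        fix x assume "x \<in> range ce" then obtain u where "x = ce u" by auto
        hence "x = ce (- (-u-1) - 1)" by simp
        thus "x \<in> range (\<lambda>i. ce (-i-1))" by blast
      qed
    qed
    have u0': "us!0 = cv (- (-t-1))" using u0 by (simp add: ac_simps)
    have t': "fs!0 = ce (- (-t-1) - 1)" using t by simp
    from core_full[OF cr' iw w(3) _ w(2) u0' t'] sub w(6) rr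
    have r: "P = arc (\<lambda>i. ce (-i-1)) (-t-1) (length fs)" "b = cv (- (-t-1 + int (length fs)))" "length fs < n"
      using w(5,6) by auto
    define m where "m = length fs"
    have "arc (\<lambda>i. ce (-i-1)) (-t-1) m = arc ce (t + 1 - int m) m"
    proof
      show "arc (\<lambda>i. ce (-i-1)) (-t-1) m \<subseteq> arc ce (t + 1 - int m) m"
      proof
        fix x assume "x \<in> arc (\<lambda>i. ce (-i-1)) (-t-1) m"
        then obtain j where j: "j < m" "x = ce (- (-t-1 + int j) - 1)" by (auto simp: arc_def)
        hence "x = ce (t + 1 - int m + int (m - 1 - j))" by (simp add: of_nat_diff)
        moreover have "m - 1 - j < m" using j by simp
        ultimately show "x \<in> arc ce (t + 1 - int m) m" by (auto simp: arc_def)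
      qed
      show "arc ce (t + 1 - int m) m \<subseteq> arc (\<lambda>i. ce (-i-1)) (-t-1) m"
      proof
        fix x assume "x \<in> arc ce (t + 1 - int m) m"
        then obtain j where j: "j < m" "x = ce (t + 1 - int m + int j)" by (auto simp: arc_def)
        have "- (-t-1 + int (m - 1 - j)) - 1 = t + 1 - int m + int j" using j by (simp add: of_nat_diff)
        hence "x = ce (- (-t-1 + int (m - 1 - j)) - 1)" using j(2) by (simp only:)
        moreover have "m - 1 - j < m" using j by simp
        ultimately show "x \<in> arc (\<lambda>i. ce (-i-1)) (-t-1) m" by (auto simp: arc_def)
      qed
    qed
    hence "P = arc ce (t + 1 - int m) m" using r(1) m_def by simp
    moreover have "cv (t + 1 - int m) = b" using r(2) m_def by (simp add: ac_simps)
    moreover have "cv (t + 1 - int m + int m) = a" using u0 a0 by simp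
    moreover have "0 < m" "m < n" using r(3) w(2) m_def by auto
    ultimately show ?thesis by (intro exI[of _ "t + 1 - int m"] exI[of _ m]) simp
  qed
qed

lemma TWO:
  assumes cyc: "is_cycle G C" and ab: "a \<noteq> b" "a \<in> evs G C" "b \<in> evs G C"
  shows "\<exists>S. subpath G C S a b \<and> subpath G C (C - S) a b \<and> (\<forall>P. subpath G C P a b \<longrightarrow> P = S \<or> P = C - S)"
proof -
  obtain n cv ce where cr: "crep G n cv ce" and fw: "\<forall>i. step G (ce i) (cv i) (cv (i+1))"
    and Cr: "C = range ce" and Er: "evs G C = range cv"
    using cycle_rep[OF cyc] by blast
  have n0: "0 < n" using crep_pos[OF cr] .
  obtain p q where pq: "a = cv p" "b = cv q" using ab Er by auto
  define d where "d = nat ((q - p) mod int n)"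
  have dd: "int d = (q - p) mod int n" using n0 by (simp add: d_def)
  have dn: "d < n" using n0 by (simp add: d_def nat_less_iff)
  have rdvd: "int n dvd (q - p - int d)"
  proof -
    have "q - p - int d = int n * ((q - p) div int n)" using dd by (simp add: minus_mod_eq_mult_div)
    thus ?thesis by simp
  qed
  have d0: "0 < d"
  proof (rule ccontr)
    assume "\<not> 0 < d" hence "d = 0" by simp
    hence "int n dvd (q - p)" using rdvd by simp
    hence "cv q = cv p" using crep_cv[OF cr] by simp
    thus False using ab pq by simp
  qed
  have cvpd: "cv (p + int d) = b"
  proof -
    have "p + int d - q = - (q - p - int d)" by simp
    hence "int n dvd (p + int d - q)" using rdvd by (simp only: dvd_minus_iff)
    thus ?thesis using crep_cv[OF cr] pq by simp
  qed
  define S where "S = arc ce p d"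
  have S1: "is_path G S a b" using arc_path[OF cr fw d0 dn, of p] cvpd pq by (simp add: S_def)
  have Ssub: "S \<subseteq> C" using Cr arc_sub by (simp add: S_def)
  have CS: "C - S = arc ce (p + int d) (n - d)" using arc_compl[OF cr, of d p] dn Cr by (simp add: S_def)
  have "cv (p + int d + int (n - d)) = a" using pq dn crep_cv[OF cr] by (simp add: of_nat_diff)
  hence S2: "is_path G (C - S) b a" using arc_path[OF cr fw, of "n - d" "p + int d"] d0 dn CS cvpd by simp
  have uniq: "P = S \<or> P = C - S" if sp: "subpath G C P a b" for P
  proof -
    have Psub: "P \<subseteq> range ce" using sp Cr by (simp add: subpath_def)
    have "\<exists>i k. 0 < k \<and> k < n \<and> P = arc ce i k \<and> ((cv i = a \<and> cv (i + int k) = b) \<or> (cv i = b \<and> cv (i + int k) = a))"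
      using sp unfolding subpath_def
    proof (elim conjE disjE)
      assume "is_path G P a b" thus ?thesis using UL[OF cr _ Psub] by blast
    next
      assume "is_path G P b a" thus ?thesis using UL[OF cr _ Psub] by blast
    qed
    then obtain i k where ik: "0 < k" "k < n" "P = arc ce i k"
      and e: "(cv i = a \<and> cv (i + int k) = b) \<or> (cv i = b \<and> cv (i + int k) = a)" by blast
    from e show ?thesis
    proof
      assume h: "cv i = a \<and> cv (i + int k) = b"
      hence h1: "int n dvd (i - p)" "int n dvd (i + int k - q)" using crep_cv[OF cr] pq by auto
      have "int k - int d = (i + int k - q) - (i - p) + (q - p - int d)" by simp
      hence "int n dvd (int k - int d)" using h1 rdvd by (simp only: dvd_add dvd_diff)
      moreover have "\<bar>int k - int d\<bar> < int n" using ik dn d0 by auto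
      ultimately have "int k - int d = 0" by (rule small_dvd)
      hence "k = d" by simp
      thus ?thesis using arc_periodic[OF cr h1(1)] ik S_def by simp
    next
      assume h: "cv i = b \<and> cv (i + int k) = a"
      hence h1: "int n dvd (i - q)" "int n dvd (i + int k - p)" using crep_cv[OF cr] pq by auto
      have "int k - int (n - d) = (i + int k - p) - (i - q) - (q - p - int d) - int n" using dn by (simp add: of_nat_diff)
      hence "int n dvd (int k - int (n - d))" using h1 rdvd by (simp only: dvd_add dvd_diff dvd_refl)
      moreover have "\<bar>int k - int (n - d)\<bar> < int n" using ik dn d0 by auto
      ultimately have "int k - int (n - d) = 0" by (rule small_dvd)
      hence "k = n - d" by simp
      moreover have "int n dvd (i - (p + int d))"
      proof -
        have "i - (p + int d) = (i - q) + (q - p - int d)" by simp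
        thus ?thesis using h1 rdvd by (simp only: dvd_add)
      qed
      ultimately show ?thesis using arc_periodic[OF cr] ik CS by simp
    qed
  qed
  have "subpath G C S a b" using S1 Ssub by (simp add: subpath_def)
  moreover have "subpath G C (C - S) a b" using S2 by (simp add: subpath_def)
  ultimately show ?thesis using uniq by blast
qed

lemma path_ends: "is_path G P a b \<Longrightarrow> a \<noteq> b \<and> a \<in> evs G P \<and> b \<in> evs G P"
proof -
  assume "is_path G P a b"
  then obtain us fs where w: "walk G us fs" "fs \<noteq> []" "distinct us" "hd us = a" "last us = b" "set fs = P"
    by (auto simp: is_path_def)
  have L: "length us = Suc (length fs)" using w by (simp add: walk_def)
  have ne: "us \<noteq> []" using L by auto
  have "hd us = us ! 0" "last us = us ! length fs" using ne L by (auto simp: hd_conv_nth last_conv_nth)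
  moreover have "0 \<noteq> length fs" using w(2) by simp
  ultimately have "a \<noteq> b" using w L by (simp add: nth_eq_iff_index_eq)
  moreover have "a \<in> set us" "b \<in> set us" using w ne by auto
  ultimately show ?thesis using evs_walk[OF w(1,2)] w(6) by simp
qed

lemma evs_mono: "P \<subseteq> C \<Longrightarrow> evs G P \<subseteq> evs G C"
  by (auto simp: evs_def)

lemma evs_Un: "evs G (P \<union> Q) = evs G P \<union> evs G Q"
  by (auto simp: evs_def)

lemma path_prefix:
  assumes w: "walk G us fs" and d: "distinct us" and m: "0 < m" "m \<le> length fs"
  shows "is_path G (set (take m fs)) (us!0) (us!m)"
proof -
  have L: "length us = Suc (length fs)" using w by (simp add: walk_def)
  show ?thesis
    unfolding is_path_def
    apply (rule exI[of _ "take (Suc m) us"], rule exI[of _ "take m fs"])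
  proof (intro conjI)
    show "walk G (take (Suc m) us) (take m fs)" using walk_take[OF w, of m] m by simp
    show "take m fs \<noteq> []" using m by (cases fs) auto
    show "distinct (take (Suc m) us)" using d by simp
    show "hd (take (Suc m) us) = us ! 0" using L by (cases us) auto
    show "last (take (Suc m) us) = us ! m" using L m by (simp add: take_Suc_conv_app_nth)
  qed simp
qed

lemma split_either:
  assumes P: "is_path G P a b \<or> is_path G P b a" and c: "c \<in> evs G P" "c \<noteq> a" "c \<noteq> b"
  shows "\<exists>P' P''. (is_path G P' a c \<or> is_path G P' c a) \<and> (is_path G P'' c b \<or> is_path G P'' b c)
     \<and> P' \<union> P'' = P \<and> P' \<inter> P'' = {}"
  using P
proof
  assume "is_path G P a b"
  from path_split[OF this c] obtain P' P'' where
    "is_path G P' a c" "is_path G P'' c b" "P' \<union> P'' = P" "P' \<inter> P'' = {}" by blast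
  thus ?thesis by (intro exI[of _ P'] exI[of _ P'']) simp
next
  assume "is_path G P b a"
  from path_split[OF this c(1,3,2)] obtain P' P'' where
    "is_path G P' b c" "is_path G P'' c a" "P' \<union> P'' = P" "P' \<inter> P'' = {}" by blast
  thus ?thesis by (intro exI[of _ P''] exI[of _ P']) (simp add: Un_commute Int_commute)
qed

lemma subpath_sym: "subpath G C P a b \<longleftrightarrow> subpath G C P b a"
  by (auto simp: subpath_def)

lemma subpath_ends: "subpath G C P a b \<Longrightarrow> a \<noteq> b \<and> a \<in> evs G C \<and> b \<in> evs G C"
proof -
  assume sp: "subpath G C P a b"
  hence PC: "P \<subseteq> C" by (simp add: subpath_def)
  have "a \<noteq> b \<and> a \<in> evs G P \<and> b \<in> evs G P"
  proof (cases "is_path G P a b")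
    case True thus ?thesis using path_ends by fast
  next
    case False hence "is_path G P b a" using sp by (simp add: subpath_def)
    thus ?thesis using path_ends by fast
  qed
  thus ?thesis using evs_mono[OF PC, of G] by auto
qed

lemma compl_subpath:
  assumes cyc: "is_cycle G C" and sp: "subpath G C P a b"
  shows "subpath G C (C - P) a b"
proof -
  note e = subpath_ends[OF sp]
  have "\<exists>S. subpath G C S a b \<and> subpath G C (C - S) a b \<and> (\<forall>P. subpath G C P a b \<longrightarrow> P = S \<or> P = C - S)"
    by (rule TWO[OF cyc]) (use e in auto)
  then obtain S where S: "subpath G C S a b" "subpath G C (C - S) a b"
    "\<forall>P. subpath G C P a b \<longrightarrow> P = S \<or> P = C - S" by blast
  have "S \<subseteq> C" using S(1) by (simp add: subpath_def)
  hence CC: "C - (C - S) = S" by blast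
  have "P = S \<or> P = C - S" using S(3) sp by simp
  thus ?thesis
  proof
    assume "P = S" thus ?thesis using S(2) by simp
  next
    assume "P = C - S" thus ?thesis using S(1) CC by simp
  qed
qed

lemma two_arcs:
  assumes cyc: "is_cycle G C" and sp1: "subpath G C R1 a b" and sp2: "subpath G C R a b"
  shows "R = R1 \<or> R = C - R1"
proof -
  note e = subpath_ends[OF sp1]
  have "\<exists>S. subpath G C S a b \<and> subpath G C (C - S) a b \<and> (\<forall>P. subpath G C P a b \<longrightarrow> P = S \<or> P = C - S)"
    by (rule TWO[OF cyc]) (use e in auto)
  then obtain S where S: "subpath G C S a b" "\<forall>P. subpath G C P a b \<longrightarrow> P = S \<or> P = C - S" by blast
  have SC: "S \<subseteq> C" using S(1) by (simp add: subpath_def)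
  have h1: "R1 = S \<or> R1 = C - S" using S(2) sp1 by simp
  have h2: "R = S \<or> R = C - S" using S(2) sp2 by simp
  show ?thesis using h1 h2 SC by (elim disjE) auto
qed

lemma mainL:
  assumes cf: "cycle_family G \<C>" and un: "uncrossable G \<C>"
  shows "C1 \<in> \<C> \<Longrightarrow> C2 \<in> \<C> \<Longrightarrow> A \<subseteq> C2 \<Longrightarrow> is_path G A v w \<Longrightarrow> v \<in> evs G C1 \<Longrightarrow> w \<in> evs G C1
    \<Longrightarrow> \<exists>P. subpath G C1 P v w \<and> (\<exists>D\<in>\<C>. D \<subseteq> P \<union> A)"
proof (induction "card A" arbitrary: C1 A v w rule: less_induct)
  case less
  obtain us fs where w: "walk G us fs" "fs \<noteq> []" "distinct us" "hd us = v" "last us = w" "set fs = A"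
    using less.prems(4) by (auto simp: is_path_def)
  have L: "length us = Suc (length fs)" using w by (simp add: walk_def)
  have une: "us \<noteq> []" using L by auto
  have u0: "us!0 = v" using w(4) une by (simp add: hd_conv_nth)
  have uL: "us!length fs = w" using w(5) une L by (simp add: last_conv_nth)
  have dfs: "distinct fs" using walk_distinct_edges[OF w(1,3)] .
  define J where "J = {j. 0 < j \<and> j \<le> length fs \<and> us!j \<in> evs G C1}"
  have LJ: "length fs \<in> J" using w(2) uL less.prems(6) by (simp add: J_def)
  define j where "j = Min J"
  have finJ: "finite J" by (simp add: J_def)
  have jJ: "j \<in> J" using finJ LJ j_def Min_in by blast
  have jmin: "\<And>i. i \<in> J \<Longrightarrow> j \<le> i" using finJ j_def by simp
  have j: "0 < j" "j \<le> length fs" "us!j \<in> evs G C1" using jJ by (auto simp: J_def)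
  have jless: "us!i \<notin> evs G C1" if "0 < i" "i < j" for i
  proof
    assume "us!i \<in> evs G C1"
    hence "i \<in> J" using that j(2) by (simp add: J_def)
    thus False using jmin that by fastforce
  qed
  define y where "y = us!j"
  define Q where "Q = set (take j fs)"
  have Qp: "is_path G Q v y" using path_prefix[OF w(1,3) j(1,2)] u0 by (simp add: Q_def y_def)
  have QA: "Q \<subseteq> A" using w(6) Q_def by (meson set_take_subset)
  have wt: "walk G (take (Suc j) us) (take j fs)" using walk_take[OF w(1) j(2)] .
  have "take j fs \<noteq> []" using j w(2) by (cases fs) auto
  hence evsQ: "evs G Q = set (take (Suc j) us)" using evs_walk[OF wt] Q_def by simp
  have ear: "evs G Q \<inter> evs G C1 = {v, y}"
  proof
    show "evs G Q \<inter> evs G C1 \<subseteq> {v, y}"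
    proof
      fix x assume x: "x \<in> evs G Q \<inter> evs G C1"
      then obtain i where i: "i < length (take (Suc j) us)" "x = take (Suc j) us ! i"
        using evsQ by (auto simp: in_set_conv_nth)
      have ij: "i \<le> j" "x = us!i" using i L j by auto
      have "i = 0 \<or> i = j" using jless[of i] ij x by fastforce
      thus "x \<in> {v, y}" using ij u0 y_def by auto
    qed
    have "v \<in> evs G Q" "y \<in> evs G Q" using path_ends[OF Qp] by auto
    thus "{v, y} \<subseteq> evs G Q \<inter> evs G C1" using less.prems(5) j(3) y_def by auto
  qed
  have spQ: "subpath G C2 Q v y" using Qp QA less.prems(3) by (auto simp: subpath_def)
  obtain P1 where P1: "subpath G C1 P1 v y" "P1 \<inter> Q = {}" "P1 \<union> Q \<in> \<C>"
    using un less.prems(1,2) spQ ear unfolding uncrossable_def by blast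
  have cyc1: "is_cycle G C1" using cf less.prems(1) by (simp add: cycle_family_def)
  have P1C: "P1 \<subseteq> C1" using P1(1) by (simp add: subpath_def)
  show ?case
  proof (cases "j = length fs")
    case True
    hence "Q = A" using Q_def w(6) by simp
    thus ?thesis using P1 True uL y_def by (intro exI[of _ P1]) auto
  next
    case False
    hence jl: "j < length fs" using j by simp
    define A' where "A' = set (drop j fs)"
    have A'p: "is_path G A' y w" using path_split_idx(2)[OF w(1,3) j(1) jl] w(5) by (simp add: A'_def y_def)
    have A'A: "A' \<subseteq> A" using w(6) A'_def by (meson set_drop_subset)
    have cardA: "card A' < card A"
      using dfs jl j(1) by (simp add: A'_def w(6)[symmetric] distinct_card)
    have vw: "v \<noteq> w" using path_ends[OF less.prems(4)] by simp
    have "us!j \<noteq> us!length fs" using jl w(3) L by (simp add: nth_eq_iff_index_eq)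
    hence yw: "y \<noteq> w" using uL y_def by simp
    define K where "K = P1 \<union> Q"
    have KC: "K \<in> \<C>" using P1(3) K_def by simp
    have cycK: "is_cycle G K" using cf KC by (simp add: cycle_family_def)
    show ?thesis
    proof (cases "w \<in> evs G P1")
      case True
      have "is_path G P1 v y \<or> is_path G P1 y v" using P1(1) by (simp add: subpath_def)
      from split_either[OF this True vw[symmetric] yw[symmetric]] obtain X0 R1 where
        XR: "is_path G X0 v w \<or> is_path G X0 w v" "is_path G R1 w y \<or> is_path G R1 y w"
            "X0 \<union> R1 = P1" "X0 \<inter> R1 = {}" by blast
      have yK: "y \<in> evs G K" using path_ends[OF Qp] evs_mono[of Q K G] K_def by auto
      have wK: "w \<in> evs G K" using True evs_mono[of P1 K G] K_def by auto
      obtain R where R: "subpath G K R y w" "\<exists>D\<in>\<C>. D \<subseteq> R \<union> A'"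
        using less.hyps[OF cardA KC less.prems(2) _ A'p yK wK] A'A less.prems(3) by blast
      have spR1: "subpath G K R1 y w" using XR(2,3) K_def by (auto simp: subpath_def)
      have spX0: "subpath G C1 X0 v w" using XR(1,3) P1C by (auto simp: subpath_def)
      have "R = R1 \<or> R = K - R1" using two_arcs[OF cycK spR1 R(1)] .
      thus ?thesis
      proof
        assume RR: "R = R1"
        define X where "X = C1 - X0"
        have spX: "subpath G C1 X v w" using compl_subpath[OF cyc1 spX0] X_def by simp
        have "R1 \<subseteq> X" using XR(3,4) P1C X_def by blast
        hence "R \<union> A' \<subseteq> X \<union> A" using RR A'A by blast
        thus ?thesis using spX R(2) by blast
      next
        assume RR: "R = K - R1"
        have "R \<union> A' \<subseteq> X0 \<union> A" using RR XR(3) K_def QA A'A by blast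
        thus ?thesis using spX0 R(2) by blast
      qed
    next
      case False
      have spc: "subpath G C1 (C1 - P1) v y" using compl_subpath[OF cyc1 P1(1)] .
      have "C1 = P1 \<union> (C1 - P1)" using P1C by blast
      hence "evs G C1 = evs G P1 \<union> evs G (C1 - P1)" using evs_Un by metis
      hence wc: "w \<in> evs G (C1 - P1)" using False less.prems(6) by blast
      have "is_path G (C1 - P1) v y \<or> is_path G (C1 - P1) y v" using spc by (simp add: subpath_def)
      from split_either[OF this wc vw[symmetric] yw[symmetric]] obtain U U' where
        UU: "is_path G U v w \<or> is_path G U w v" "U \<union> U' = C1 - P1" by blast
      have spU: "subpath G C1 U v w" using UU by (auto simp: subpath_def)
      define X where "X = C1 - U"
      have spX: "subpath G C1 X v w" using compl_subpath[OF cyc1 spU] X_def by simp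
      have "P1 \<subseteq> X" using UU(2) P1C X_def by blast
      hence "K \<subseteq> X \<union> A" using K_def QA by blast
      thus ?thesis using spX KC by blast
    qed
  qed
qed

lemma L2:
  assumes cf: "cycle_family G \<C>" and un: "uncrossable G \<C>"
    and C: "C1 \<in> \<C>" "C2 \<in> \<C>" and sp: "subpath G C2 Z v w" and e: "v \<in> evs G C1" "w \<in> evs G C1"
  shows "\<exists>P. subpath G C1 P v w \<and> (\<exists>D\<in>\<C>. D \<subseteq> P \<union> Z)"
proof -
  have ZC: "Z \<subseteq> C2" using sp by (simp add: subpath_def)
  have "is_path G Z v w \<or> is_path G Z w v" using sp by (simp add: subpath_def)
  thus ?thesis
  proof
    assume "is_path G Z v w"
    thus ?thesis using mainL[OF cf un C ZC _ e] by blast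
  next
    assume "is_path G Z w v"
    from mainL[OF cf un C ZC this e(2,1)] obtain P where
      "subpath G C1 P w v" "\<exists>D\<in>\<C>. D \<subseteq> P \<union> Z" by blast
    thus ?thesis using subpath_sym by metis
  qed
qed

theorem theorem4p4:
  fixes G :: "('v, 'e) graph" and \<C> :: "'e set set"
  assumes "wf_graph G" and "cycle_family G \<C>" and "uncrossable G \<C>"
  shows "strongly_uncrossable G \<C>"
  unfolding strongly_uncrossable_def
proof (intro ballI allI impI)
  fix C1 C2 v w
  assume C: "C1 \<in> \<C>" "C2 \<in> \<C>"
    and h: "v \<noteq> w \<and> v \<in> evs G C1 \<and> w \<in> evs G C1 \<and> v \<in> evs G C2 \<and> w \<in> evs G C2"
  note cf = assms(2) and un = assms(3)
  have cyc1: "is_cycle G C1" using cf C by (simp add: cycle_family_def)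
  have cyc2: "is_cycle G C2" using cf C by (simp add: cycle_family_def)
  have "\<exists>S. subpath G C1 S v w \<and> subpath G C1 (C1 - S) v w \<and> (\<forall>P. subpath G C1 P v w \<longrightarrow> P = S \<or> P = C1 - S)"
    by (rule TWO[OF cyc1]) (use h in auto)
  then obtain X where X: "subpath G C1 X v w" "subpath G C1 (C1 - X) v w" by blast
  have "\<exists>S. subpath G C2 S v w \<and> subpath G C2 (C2 - S) v w \<and> (\<forall>P. subpath G C2 P v w \<longrightarrow> P = S \<or> P = C2 - S)"
    by (rule TWO[OF cyc2]) (use h in auto)
  then obtain A where A: "subpath G C2 A v w" "subpath G C2 (C2 - A) v w" by blast
  define Y where "Y = C1 - X"
  define B where "B = C2 - A"
  have XC: "X \<subseteq> C1" using X by (simp add: subpath_def)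
  have AC: "A \<subseteq> C2" using A by (simp add: subpath_def)
  have CY: "C1 - Y = X" using XC Y_def by blast
  have CB: "C2 - B = A" using AC B_def by blast
  define ok where "ok P Z \<longleftrightarrow> (\<exists>D\<in>\<C>. D \<subseteq> P \<union> Z)" for P Z
  have ev1: "v \<in> evs G C1" "w \<in> evs G C1" and ev2: "v \<in> evs G C2" "w \<in> evs G C2" using h by auto
  have side1: "ok X Z \<or> ok Y Z" if sZ: "subpath G C2 Z v w" for Z
  proof -
    obtain P where P: "subpath G C1 P v w" "\<exists>D\<in>\<C>. D \<subseteq> P \<union> Z"
      using L2[OF cf un C sZ ev1] by blast
    have "P = X \<or> P = C1 - X" using two_arcs[OF cyc1 X(1) P(1)] .
    thus ?thesis using P(2) unfolding Y_def ok_def by (elim disjE) simp_all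
  qed
  have side2: "ok Z A \<or> ok Z B" if sZ: "subpath G C1 Z v w" for Z
  proof -
    obtain P where P: "subpath G C2 P v w" "\<exists>D\<in>\<C>. D \<subseteq> P \<union> Z"
      using L2[OF cf un C(2,1) sZ ev2] by blast
    have "P = A \<or> P = C2 - A" using two_arcs[OF cyc2 A(1) P(1)] .
    thus ?thesis using P(2) unfolding B_def ok_def by (elim disjE) (simp_all add: Un_commute)
  qed
  have spY: "subpath G C1 Y v w" using X(2) Y_def by simp
  have spB: "subpath G C2 B v w" using A(2) B_def by simp
  have o1: "ok X A \<or> ok Y A" using side1[OF A(1)] .
  have o2: "ok X B \<or> ok Y B" using side1[OF spB] .
  have o3: "ok X A \<or> ok X B" using side2[OF X(1)] .
  have o4: "ok Y A \<or> ok Y B" using side2[OF spY] .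
  have "(ok X A \<and> ok Y B) \<or> (ok X B \<and> ok Y A)" using o1 o2 o3 o4 by blast
  thus "\<exists>P1 P2. subpath G C1 P1 v w \<and> subpath G C2 P2 v w \<and> (\<exists>D\<in>\<C>. D \<subseteq> P1 \<union> P2) \<and>
          (\<exists>D\<in>\<C>. D \<subseteq> C1 - P1 \<union> (C2 - P2))"
  proof
    assume "ok X A \<and> ok Y B"
    hence "(\<exists>D\<in>\<C>. D \<subseteq> X \<union> A) \<and> (\<exists>D\<in>\<C>. D \<subseteq> (C1 - X) \<union> (C2 - A))"
      unfolding ok_def Y_def B_def by simp
    thus ?thesis using X(1) A(1) by (intro exI[of _ X] exI[of _ A]) simp
  next
    assume "ok X B \<and> ok Y A"
    hence "(\<exists>D\<in>\<C>. D \<subseteq> X \<union> B) \<and> (\<exists>D\<in>\<C>. D \<subseteq> (C1 - X) \<union> (C2 - B))"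
      using CB Y_def unfolding ok_def by simp
    thus ?thesis using X(1) spB by (intro exI[of _ X] exI[of _ B]) simp
  qed
qed

end
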